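(* Let $\alpha<\beta\le\alpha+2\pi$, $\gamma:=\pi/(\beta-\alpha)$, $a\in(0,1)$, $r>0$, and $z\in\angle(\alpha,\beta)$. If $a|z|\ge r$, then $$\omega\bigl(z,\overline D(r);\angle(\alpha,\beta)\bigr)\le\frac{2r^{\gamma}}{\pi(1-a^{\gamma})^2}\Bigl(-\operatorname{Im}\frac1{(ze^{-i\alpha})^{\gamma}}\Bigr),$$ and if $ar\ge|z|$, then $$\omega\bigl(z,\mathbb{C}\setminus D(r);\angle(\alpha,\beta)\bigr)\le\frac{2r^{-\gamma}}{\pi(1-a^{\gamma})^2}\operatorname{Im}\,(ze^{-i\alpha})^{\gamma}.$$
   Context: $\angle(\alpha,\beta)=\{z\ne0:\ \text{some value of }\arg z\in(\alpha,\beta)\}$ is an open angle; $(ze^{-i\alpha})^{\gamma}$ is the branch on the angle that maps it conformally onto the upper half-plane and is positive on $(0,\infty)$. For $z$ in the angle with image $w$ and Borel $B$, $\omega(z,B;\angle(\alpha,\beta)):=\frac1\pi\int_{B'}\frac{\operatorname{Im}w}{(t-\operatorname{Re}w)^2+(\operatorname{Im}w)^2}dt$, where $B'\subset\mathbb{R}$ is the image of $B\cap\partial\angle(\alpha,\beta)$ under the boundary extension of this map (the harmonic measure of $B\cap\partial\angle(\alpha,\beta)$ for the angle). $D(r)$, $\overline D(r)$: open/closed discs of radius $r$ about $0$. *)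

theory Defs
  imports "HOL-Analysis.Analysis"
begin

definition angle :: "real \<Rightarrow> real \<Rightarrow> complex set" where
  "angle \<alpha> \<beta> = {z. z \<noteq> 0 \<and> (\<exists>\<theta>. \<alpha> < \<theta> \<and> \<theta> < \<beta> \<and> z = of_real (cmod z) * cis \<theta>)}"

text \<open>The (unique, since beta - alpha <= 2 pi) argument value of z in (alpha, beta).\<close>
definition angle_arg :: "real \<Rightarrow> real \<Rightarrow> complex \<Rightarrow> real" where
  "angle_arg \<alpha> \<beta> z = (THE \<theta>. \<alpha> < \<theta> \<and> \<theta> < \<beta> \<and> z = of_real (cmod z) * cis \<theta>)"

definition angle_exp :: "real \<Rightarrow> real \<Rightarrow> real" where
  "angle_exp \<alpha> \<beta> = pi / (\<beta> - \<alpha>)"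

text \<open>The branch of (z e^{-i alpha})^gamma on the angle mapping it onto the upper
  half-plane, positive where z e^{-i alpha} is positive.\<close>
definition angle_map :: "real \<Rightarrow> real \<Rightarrow> complex \<Rightarrow> complex" where
  "angle_map \<alpha> \<beta> z =
     of_real (cmod z powr angle_exp \<alpha> \<beta>) * cis (angle_exp \<alpha> \<beta> * (angle_arg \<alpha> \<beta> z - \<alpha>))"

text \<open>Image on the real line of B \<inter> boundary of the angle under the boundary extension
  of the map: the ray of argument alpha goes to [0,inf) via s e^{i alpha} \<mapsto> s^gamma,
  the ray of argument beta goes to (-inf,0] via s e^{i beta} \<mapsto> -s^gamma
  (the vertex 0 goes to 0).\<close>
definition angle_bdry_image :: "real \<Rightarrow> real \<Rightarrow> complex set \<Rightarrow> real set" where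
  "angle_bdry_image \<alpha> \<beta> B =
     {t. 0 \<le> t \<and> of_real (t powr (1 / angle_exp \<alpha> \<beta>)) * cis \<alpha> \<in> B} \<union>
     {t. t \<le> 0 \<and> of_real ((- t) powr (1 / angle_exp \<alpha> \<beta>)) * cis \<beta> \<in> B}"

text \<open>Harmonic measure omega(z, B; angle(alpha,beta)) via the Poisson kernel of the
  upper half-plane.\<close>
definition harm_measure_angle :: "complex \<Rightarrow> complex set \<Rightarrow> real \<Rightarrow> real \<Rightarrow> real" where
  "harm_measure_angle z B \<alpha> \<beta> =
     (let w = angle_map \<alpha> \<beta> z in
      (1 / pi) * set_lebesgue_integral lborel (angle_bdry_image \<alpha> \<beta> B)
        (\<lambda>t. Im w / ((t - Re w)\<^sup>2 + (Im w)\<^sup>2)))"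

end

theory Submission
  imports Defs
begin

lemma arg_props:
  assumes "\<alpha> < \<beta>" "\<beta> \<le> \<alpha> + 2 * pi" "z \<in> angle \<alpha> \<beta>"
  shows "\<alpha> < angle_arg \<alpha> \<beta> z \<and> angle_arg \<alpha> \<beta> z < \<beta> \<and> z \<noteq> 0"
proof -
  from assms(3) obtain \<theta> where th: "\<alpha> < \<theta>" "\<theta> < \<beta>" "z = of_real (cmod z) * cis \<theta>" and z0: "z \<noteq> 0"
    unfolding angle_def by blast
  have "angle_arg \<alpha> \<beta> z = \<theta>"
    unfolding angle_arg_def
  proof (rule the_equality)
    show "\<alpha> < \<theta> \<and> \<theta> < \<beta> \<and> z = complex_of_real (cmod z) * cis \<theta>" using th by blast
  next
    fix \<phi> assume h: "\<alpha> < \<phi> \<and> \<phi> < \<beta> \<and> z = complex_of_real (cmod z) * cis \<phi>"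
    have cz: "cmod z \<noteq> 0" using z0 by simp
    have "complex_of_real (cmod z) * cis \<phi> = complex_of_real (cmod z) * cis \<theta>" using h th by metis
    hence "cis \<phi> = cis \<theta>" using cz by simp
    hence "sin \<phi> = sin \<theta> \<and> cos \<phi> = cos \<theta>" by (metis cis.sel)
    then obtain n :: int where n: "\<phi> = \<theta> + 2 * pi * n" using sin_cos_eq_iff by blast
    have "\<bar>2 * pi * n\<bar> < 2 * pi" using n h th assms(2) by auto
    hence "\<bar>real_of_int n\<bar> < 1" by (simp add: abs_mult)
    hence "n = 0" by linarith
    thus "\<phi> = \<theta>" using n by simp
  qed
  thus ?thesis using th z0 by simp
qed

lemma nn_tail:
  assumes "R > 0"
  shows "(\<integral>\<^sup>+ x. ennreal (indicator {R..} x * (1 / x^2)) \<partial>lborel) = ennreal (1 / R)"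
proof -
  have "((\<lambda>x::real. 1 / x ^ 2) has_integral 1 / (real (2 - 1) * R ^ (2 - 1))) {R..}"
    by (rule has_integral_inverse_power_to_inf) (use assms in auto)
  hence "((\<lambda>x::real. 1 / x ^ 2) has_integral 1 / R) {R..}" by simp
  from nn_integral_has_integral_lebesgue[OF _ this] show ?thesis by simp
qed

lemma nn_tail2:
  assumes "R > 0"
  shows "(\<integral>\<^sup>+ x. ennreal (indicator {..-R} x * (1 / x^2)) \<partial>lborel) = ennreal (1 / R)"
proof -
  have "(\<integral>\<^sup>+ x. ennreal (indicator {..-R} x * (1 / x^2)) \<partial>lborel)
     = (\<integral>\<^sup>+ x. ennreal (indicator {..-R} x * (1 / x^2)) \<partial>(distr lborel borel uminus))"
    by (simp add: lborel_distr_uminus)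
  also have "\<dots> = (\<integral>\<^sup>+ x. ennreal (indicator {..-R} (-x) * (1 / (-x)^2)) \<partial>lborel)"
    by (subst nn_integral_distr) auto
  also have "\<dots> = (\<integral>\<^sup>+ x. ennreal (indicator {R..} x * (1 / x^2)) \<partial>lborel)"
    by (intro nn_integral_cong) (auto simp: indicator_def)
  finally show ?thesis using nn_tail[OF assms] by simp
qed
lemma denom_bound:
  fixes t u v \<rho> :: real
  assumes "u^2 + v^2 = \<rho>^2" "\<rho> \<ge> 0"
  shows "(t - u)^2 + v^2 \<ge> (\<bar>t\<bar> - \<rho>)^2"
proof -
  have "\<bar>u\<bar>^2 \<le> \<rho>^2" using assms(1) by (simp add: power2_abs) (smt (verit) zero_le_power2)
  hence "\<bar>u\<bar> \<le> \<rho>" using assms(2) by (rule power2_le_imp_le)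
  hence "\<bar>t\<bar> * \<bar>u\<bar> \<le> \<bar>t\<bar> * \<rho>" by (simp add: mult_left_mono)
  moreover have "t * u \<le> \<bar>t\<bar> * \<bar>u\<bar>" by (metis abs_ge_self abs_mult)
  ultimately have "t * u \<le> \<bar>t\<bar> * \<rho>" by linarith
  hence "(t - u)^2 + v^2 = t^2 - 2*t*u + \<rho>^2" using assms by (simp add: power2_diff algebra_simps) 
  also have "\<dots> \<ge> (\<bar>t\<bar> - \<rho>)^2" using \<open>t * u \<le> \<bar>t\<bar> * \<rho>\<close> by (simp add: power2_diff power2_abs algebra_simps)
  finally show ?thesis .
qed

theorem proposition13:
  fixes \<alpha> \<beta> a r :: real and z :: complex
  defines "\<gamma> \<equiv> pi / (\<beta> - \<alpha>)"
  assumes "\<alpha> < \<beta>" and "\<beta> \<le> \<alpha> + 2 * pi"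
    and "0 < a" and "a < 1" and "0 < r"
    and "z \<in> angle \<alpha> \<beta>"
  shows "(a * cmod z \<ge> r \<longrightarrow>
           harm_measure_angle z (cball 0 r) \<alpha> \<beta>
             \<le> 2 * r powr \<gamma> / (pi * (1 - a powr \<gamma>)\<^sup>2) * (- Im (1 / angle_map \<alpha> \<beta> z))) \<and>
         (a * r \<ge> cmod z \<longrightarrow>
           harm_measure_angle z (- ball 0 r) \<alpha> \<beta>
             \<le> 2 * r powr (- \<gamma>) / (pi * (1 - a powr \<gamma>)\<^sup>2) * Im (angle_map \<alpha> \<beta> z))"
proof -
  have gpos: "\<gamma> > 0" using assms(2) unfolding \<gamma>_def by simp
  have ge: "angle_exp \<alpha> \<beta> = \<gamma>" unfolding angle_exp_def \<gamma>_def ..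
  define \<theta> where "\<theta> = angle_arg \<alpha> \<beta> z"
  have th: "\<alpha> < \<theta>" "\<theta> < \<beta>" and z0: "z \<noteq> 0" using arg_props[OF assms(2,3,7)] \<theta>_def by auto
  define \<phi> where "\<phi> = \<gamma> * (\<theta> - \<alpha>)"
  have ph0: "0 < \<phi>" unfolding \<phi>_def using gpos th by simp
  have "\<gamma> * (\<theta> - \<alpha>) < \<gamma> * (\<beta> - \<alpha>)" using gpos th by simp
  hence ph1: "\<phi> < pi" unfolding \<phi>_def \<gamma>_def using assms(2) by simp
  define \<rho> where "\<rho> = cmod z powr \<gamma>"
  have rho: "\<rho> > 0" unfolding \<rho>_def using z0 by simp
  define w where "w = angle_map \<alpha> \<beta> z"
  have w: "w = of_real \<rho> * cis \<phi>" unfolding w_def angle_map_def ge \<rho>_def \<phi>_def \<theta>_def ..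
  define u where "u = Re w"
  define v where "v = Im w"
  have u: "u = \<rho> * cos \<phi>" and v: "v = \<rho> * sin \<phi>" unfolding u_def v_def w by simp_all
  have vpos: "v > 0" unfolding v using rho sin_gt_zero[OF ph0 ph1] by simp
  have uv: "u^2 + v^2 = \<rho>^2" unfolding u v by (simp add: power_mult_distrib flip: distrib_left)

  have invw: "- Im (1 / w) = v / \<rho>^2"
  proof -
    have "1 / (of_real \<rho> * cis \<phi>) = of_real (1/\<rho>) * cis (-\<phi>)" using rho
      by (simp add: divide_inverse mult.commute)
    thus ?thesis unfolding w v using rho by (simp add: power2_eq_square)
  qed
  define A where "A = a powr \<gamma>"
  have A0: "0 < A" and A1: "A < 1" unfolding A_def using assms(4,5) gpos powr_less_mono2[of \<gamma> a 1] by auto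
  define R where "R = r powr \<gamma>"
  have Rpos: "R > 0" unfolding R_def using assms(6) by simp
  define F where "F = (\<lambda>t::real. v / ((t - u)^2 + v^2))"
  have Fnn: "F t \<ge> 0" for t unfolding F_def using vpos by simp
  have hm: "harm_measure_angle z B \<alpha> \<beta> = (1/pi) * (LINT t|lborel. indicator (angle_bdry_image \<alpha> \<beta> B) t * F t)" for B
    unfolding harm_measure_angle_def Let_def w_def[symmetric] F_def u_def v_def set_lebesgue_integral_def
    by simp
  have pw1: "t \<le> R" if "t \<ge> 0" "t powr (1/\<gamma>) \<le> r" for t
  proof -
    have "(t powr (1/\<gamma>)) powr \<gamma> \<le> r powr \<gamma>"
      using gpos that by (intro powr_mono2) auto
    also have "(t powr (1/\<gamma>)) powr \<gamma> = t" using gpos that by (simp add: powr_powr)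
    finally show ?thesis unfolding R_def .
  qed
  have pw2: "R \<le> t" if "t \<ge> 0" "r \<le> t powr (1/\<gamma>)" for t
  proof -
    have "r powr \<gamma> \<le> (t powr (1/\<gamma>)) powr \<gamma>"
      using gpos that assms(6) by (intro powr_mono2) auto
    also have "(t powr (1/\<gamma>)) powr \<gamma> = t" using gpos that by (simp add: powr_powr)
    finally show ?thesis unfolding R_def .
  qed
  have nrm: "norm (of_real (x powr e) * cis c) = x powr e" for x e c :: real
    by (simp add: norm_mult)
  show ?thesis
  proof (intro conjI impI)
    assume h: "a * cmod z \<ge> r"
    have "R \<le> (a * cmod z) powr \<gamma>" unfolding R_def
      using h assms(6) gpos by (intro powr_mono2) auto
    also have "\<dots> = A * \<rho>" unfolding A_def \<rho>_def using assms(4) by (simp add: powr_mult)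
    finally have RA: "R \<le> A * \<rho>" .
    have sub: "\<bar>t\<bar> \<le> R" if "t \<in> angle_bdry_image \<alpha> \<beta> (cball 0 r)" for t
    proof -
      from that have "(0 \<le> t \<and> norm (of_real (t powr (1/\<gamma>)) * cis \<alpha>) \<le> r) \<or>
                 (t \<le> 0 \<and> norm (of_real ((-t) powr (1/\<gamma>)) * cis \<beta>) \<le> r)"
        unfolding angle_bdry_image_def ge by simp
      thus ?thesis unfolding nrm using pw1[of t] pw1[of "-t"] by auto
    qed
    define C where "C = v / (\<rho> * (1 - A))^2"
    have Cnn: "C \<ge> 0" unfolding C_def using vpos by simp
    have "(\<integral>\<^sup>+ t. ennreal (indicator (angle_bdry_image \<alpha> \<beta> (cball 0 r)) t * F t) \<partial>lborel)
        \<le> (\<integral>\<^sup>+ t. ennreal C * indicator {-R..R} t \<partial>lborel)"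
    proof (intro nn_integral_mono)
      fix t
      show "ennreal (indicator (angle_bdry_image \<alpha> \<beta> (cball 0 r)) t * F t) \<le> ennreal C * indicator {-R..R} t"
      proof (cases "t \<in> angle_bdry_image \<alpha> \<beta> (cball 0 r)")
        case True
        hence t: "\<bar>t\<bar> \<le> R" by (rule sub)
        hence tI: "t \<in> {-R..R}" by (simp add: abs_le_iff)
        have d: "(t - u)^2 + v^2 \<ge> (\<bar>t\<bar> - \<rho>)^2" by (rule denom_bound[OF uv]) (use rho in auto)
        have e1: "\<rho> * (1 - A) \<le> \<rho> - \<bar>t\<bar>" using t RA by (simp add: algebra_simps)
        have "(\<rho> * (1 - A))^2 \<le> (\<rho> - \<bar>t\<bar>)^2" by (rule power_mono[OF e1]) (use A1 rho in simp)
        also have "(\<rho> - \<bar>t\<bar>)^2 = (\<bar>t\<bar> - \<rho>)^2" by (simp add: power2_commute)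
        finally have d2: "(\<rho> * (1 - A))^2 \<le> (t - u)^2 + v^2" using d by linarith
        have dpos: "(t - u)^2 + v^2 > 0" using vpos by (simp add: add_nonneg_pos)
        have pos: "(\<rho> * (1 - A))^2 > 0" using rho A1 by simp
        have "F t \<le> C" unfolding F_def C_def
          by (rule divide_left_mono[OF d2]) (use vpos pos dpos in \<open>auto intro: mult_pos_pos\<close>)
        thus ?thesis using True tI by (simp add: ennreal_leI)
      qed simp
    qed
    also have "\<dots> = ennreal C * emeasure lborel {-R..R}"
      by (rule nn_integral_cmult_indicator) simp
    also have "\<dots> = ennreal (C * (2 * R))" using Rpos Cnn by (simp add: ennreal_mult)
    finally have "(LINT t|lborel. indicator (angle_bdry_image \<alpha> \<beta> (cball 0 r)) t * F t) \<le> C * (2 * R)"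
      by (intro integral_real_bounded) (use Cnn Rpos in auto)
    hence "harm_measure_angle z (cball 0 r) \<alpha> \<beta> \<le> (1/pi) * (C * (2 * R))"
      unfolding hm by (simp add: divide_right_mono)
    also have "\<dots> = 2 * r powr \<gamma> / (pi * (1 - a powr \<gamma>)\<^sup>2) * (- Im (1 / angle_map \<alpha> \<beta> z))"
      unfolding w_def[symmetric] invw C_def R_def[symmetric] A_def[symmetric]
      using rho A1 by (simp only: power_mult_distrib) (simp add: field_simps)
    finally show "harm_measure_angle z (cball 0 r) \<alpha> \<beta> \<le> 2 * r powr \<gamma> / (pi * (1 - a powr \<gamma>)\<^sup>2) * (- Im (1 / angle_map \<alpha> \<beta> z))" .
  next
    assume h: "a * r \<ge> cmod z"
    have "\<rho> \<le> (a * r) powr \<gamma>" unfolding \<rho>_def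
      using h gpos by (intro powr_mono2) auto
    also have "\<dots> = A * R" unfolding A_def R_def using assms(4,6) by (simp add: powr_mult)
    finally have RA: "\<rho> \<le> A * R" .
    have sub: "R \<le> \<bar>t\<bar>" if "t \<in> angle_bdry_image \<alpha> \<beta> (- ball 0 r)" for t
    proof -
      from that have "(0 \<le> t \<and> r \<le> norm (of_real (t powr (1/\<gamma>)) * cis \<alpha>)) \<or>
                 (t \<le> 0 \<and> r \<le> norm (of_real ((-t) powr (1/\<gamma>)) * cis \<beta>))"
        unfolding angle_bdry_image_def ge by (simp add: not_less)
      thus ?thesis unfolding nrm using pw2[of t] pw2[of "-t"] by auto
    qed
    define K where "K = v / (1 - A)^2"
    have Knn: "K \<ge> 0" unfolding K_def using vpos by simp
    have "(\<integral>\<^sup>+ t. ennreal (indicator (angle_bdry_image \<alpha> \<beta> (- ball 0 r)) t * F t) \<partial>lborel)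
        \<le> (\<integral>\<^sup>+ t. ennreal K * (ennreal (indicator {R..} t * (1 / t^2)) + ennreal (indicator {..-R} t * (1 / t^2))) \<partial>lborel)"
    proof (intro nn_integral_mono)
      fix t
      show "ennreal (indicator (angle_bdry_image \<alpha> \<beta> (- ball 0 r)) t * F t) \<le> ennreal K * (ennreal (indicator {R..} t * (1 / t^2)) + ennreal (indicator {..-R} t * (1 / t^2)))"
      proof (cases "t \<in> angle_bdry_image \<alpha> \<beta> (- ball 0 r)")
        case True
        hence t: "R \<le> \<bar>t\<bar>" by (rule sub)
        have tpos: "\<bar>t\<bar> > 0" using t Rpos by linarith
        have d: "(t - u)^2 + v^2 \<ge> (\<bar>t\<bar> - \<rho>)^2" by (rule denom_bound[OF uv]) (use rho in auto)
        have "A * R \<le> A * \<bar>t\<bar>" using t A0 by simp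
        hence e1: "\<bar>t\<bar> * (1 - A) \<le> \<bar>t\<bar> - \<rho>" using RA by (simp add: algebra_simps)
        have "(\<bar>t\<bar> * (1 - A))^2 \<le> (\<bar>t\<bar> - \<rho>)^2" by (rule power_mono[OF e1]) (use A1 tpos in simp)
        hence d2: "t^2 * (1 - A)^2 \<le> (t - u)^2 + v^2" using d by (simp add: power_mult_distrib)
        have dpos: "(t - u)^2 + v^2 > 0" using vpos by (simp add: add_nonneg_pos)
        have pos: "t^2 * (1 - A)^2 > 0" using tpos A1 by simp
        have "F t \<le> v / (t^2 * (1 - A)^2)" unfolding F_def
          by (rule divide_left_mono[OF d2]) (use vpos pos dpos in \<open>auto intro: mult_pos_pos\<close>)
        also have "\<dots> = K * (1 / t^2)" unfolding K_def by simp
        finally have Ft: "F t \<le> K * (1 / t^2)" .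
        have "ennreal (F t) \<le> ennreal (K * (1 / t^2))" using Ft by (rule ennreal_leI)
        also have "\<dots> = ennreal K * ennreal (1 / t^2)" by (rule ennreal_mult) (use Knn in auto)
        also have "ennreal (1 / t^2) \<le> ennreal (indicator {R..} t * (1 / t^2)) + ennreal (indicator {..-R} t * (1 / t^2))"
          using t by (cases "t \<ge> 0") (auto simp: indicator_def)
        hence "ennreal K * ennreal (1 / t^2) \<le> ennreal K * (ennreal (indicator {R..} t * (1 / t^2)) + ennreal (indicator {..-R} t * (1 / t^2)))"
          by (rule mult_left_mono) simp
        finally show ?thesis using True by simp
      qed simp
    qed
    also have "\<dots> = ennreal K * ((\<integral>\<^sup>+ t. ennreal (indicator {R..} t * (1 / t^2)) \<partial>lborel) + (\<integral>\<^sup>+ t. ennreal (indicator {..-R} t * (1 / t^2)) \<partial>lborel))"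
      by (subst nn_integral_cmult) (auto simp: nn_integral_add)
    also have "\<dots> = ennreal K * ennreal (2 / R)" using nn_tail[OF Rpos] nn_tail2[OF Rpos] Knn Rpos
      by (simp add: ennreal_plus[symmetric] del: ennreal_plus)
    also have "\<dots> = ennreal (K * (2 / R))" by (rule ennreal_mult[symmetric]) (use Knn Rpos in auto)
    finally have "(LINT t|lborel. indicator (angle_bdry_image \<alpha> \<beta> (- ball 0 r)) t * F t) \<le> K * (2 / R)"
      by (intro integral_real_bounded) (use Knn Rpos in auto)
    hence "harm_measure_angle z (- ball 0 r) \<alpha> \<beta> \<le> (1/pi) * (K * (2 / R))"
      unfolding hm by (intro mult_left_mono) auto
    also have "\<dots> = 2 * r powr (- \<gamma>) / (pi * (1 - a powr \<gamma>)\<^sup>2) * Im (angle_map \<alpha> \<beta> z)"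
      unfolding w_def[symmetric] v_def[symmetric] K_def powr_minus R_def[symmetric] A_def[symmetric]
      using Rpos A1 by (simp add: field_simps)
    finally show "harm_measure_angle z (- ball 0 r) \<alpha> \<beta> \<le> 2 * r powr (- \<gamma>) / (pi * (1 - a powr \<gamma>)\<^sup>2) * Im (angle_map \<alpha> \<beta> z)" .
  qed
qed
end
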